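(* Let $n\in\mathbb{Z}$. The standard holomorphic structure $\overline{\nabla}=\overline{\nabla}_{(n)}$ on $\mathcal{L}_n$ is a bimodule connection with associated bimodule isomorphism $\Phi_{(n)}$; that is, for all $\eta\in\mathcal{L}_n$ and $f\in\mathcal{A}(\mathbb{CP}^1_q)$, $$\overline{\nabla}(\eta f)=\overline{\nabla}(\eta)\,f+\Phi_{(n)}(\eta\otimes\bar\partial f).$$
   Context: Fix $0<q<1$. Let $\mathcal{A}(SU_q(2))$ be the unital complex $*$-algebra generated by $a,c$ subject to $ac=qca$, $ac^*=qc^*a$, $cc^*=c^*c$, $a^*a+c^*c=aa^*+q^2cc^*=1$. Let $U_q(su(2))$ be the Hopf algebra generated by $K,K^{-1},E,F$ with $KK^{-1}=K^{-1}K=1$, $KE=qEK$, $KF=q^{-1}FK$, $EF-FE=(K^2-K^{-2})/(q-q^{-1})$, coproduct $\Delta K=K\otimes K$, $\Delta E=E\otimes K+K^{-1}\otimes E$, $\Delta F=F\otimes K+K^{-1}\otimes F$, counit $\epsilon(K)=1$, $\epsilon(E)=\epsilon(F)=0$. It acts on $\mathcal{A}(SU_q(2))$ from the left making it a left module algebra, with $K\triangleright a=q^{-1/2}a$, $K\triangleright c=q^{-1/2}c$, $K\triangleright a^*=q^{1/2}a^*$, $K\triangleright c^*=q^{1/2}c^*$, $E\triangleright a=-qc^*$, $E\triangleright c=a^*$, $E\triangleright a^*=E\triangleright c^*=0$, $F\triangleright a=F\triangleright c=0$, $F\triangleright a^*=c$, $F\triangleright c^*=-q^{-1}a$. Put $X_-=q^{-1/2}FK$.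 For $n\in\mathbb{Z}$ let $\mathcal{L}_n=\{x:K\triangleright x=q^{n/2}x\}$ and $\mathcal{A}(\mathbb{CP}^1_q):=\mathcal{L}_0$ (write $\mathcal{B}$ for it); each $\mathcal{L}_n$ is a $\mathcal{B}$-bimodule and $X_-\triangleright\mathcal{L}_n\subseteq\mathcal{L}_{n-2}$. Let $\Omega^1(SU_q(2))$ be the $\mathcal{A}(SU_q(2))$-bimodule which is free as a left module with basis $\omega_+,\omega_-,\omega_z$, with right multiplication determined by $\omega_\pm x=q^kx\omega_\pm$, $\omega_zx=q^{2k}x\omega_z$ for $x\in\mathcal{L}_k$. Put $\Omega^{(0,1)}(\mathbb{CP}^1_q):=\mathcal{L}_{-2}\omega_-$ and $\bar\partial f:=(X_-\triangleright f)\omega_-$ for $f\in\mathcal{B}$. The multiplication maps $\mu_1:\mathcal{L}_n\otimes_{\mathcal{B}}\Omega^{(0,1)}(\mathbb{CP}^1_q)\to\mathcal{L}_{n-2}\omega_-$ and $\mu_2:\Omega^{(0,1)}(\mathbb{CP}^1_q)\otimes_{\mathcal{B}}\mathcal{L}_n\to\mathcal{L}_{n-2}\omega_-$ (products taken in $\Omega^1(SU_q(2))$) are $\mathcal{B}$-bimodule isomorphisms; set $\Phi_{(n)}:=\mu_2^{-1}\circ\mu_1$. The standard holomorphic structure on $\mathcal{L}_n$ is $\overline{\nabla}_{(n)}:\mathcal{L}_n\to\Omega^{(0,1)}(\mathbb{CP}^1_q)\otimes_{\mathcal{B}}\mathcal{L}_n$, $\overline{\nabla}_{(n)}(\phi):=\mu_2^{-1}\big((X_-\triangleright\phi)\,\omega_-\big)$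 (equivalently $q^{-n+2}\omega_-(X_-\triangleright\phi)$); it satisfies the left Leibniz rule $\overline{\nabla}(f\phi)=f\overline{\nabla}(\phi)+\bar\partial f\otimes\phi$. Right multiplication by $f\in\mathcal{B}$ on $\Omega^{(0,1)}\otimes_{\mathcal{B}}\mathcal{L}_n$ acts on the $\mathcal{L}_n$ factor. *)

theory Defs
  imports "HOL-Analysis.Analysis"
begin

definition complex_alg :: "(complex \<Rightarrow> 'a::ring_1) \<Rightarrow> bool" where
  "complex_alg emb \<longleftrightarrow> emb 1 = 1 \<and>
     (\<forall>x y. emb (x + y) = emb x + emb y) \<and> (\<forall>x y. emb (x * y) = emb x * emb y) \<and>
     (\<forall>z x. emb z * x = x * emb z)"

definition clin :: "(complex \<Rightarrow> 'a::ring_1) \<Rightarrow> ('a \<Rightarrow> 'a) \<Rightarrow> bool" where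
  "clin emb T \<longleftrightarrow> (\<forall>x y. T (x + y) = T x + T y) \<and> (\<forall>z x. T (emb z * x) = emb z * T x)"

inductive_set gen_alg :: "(complex \<Rightarrow> 'a::ring_1) \<Rightarrow> 'a set \<Rightarrow> 'a set"
  for emb G where
  scal: "emb z \<in> gen_alg emb G"
| gen: "x \<in> G \<Longrightarrow> x \<in> gen_alg emb G"
| add: "x \<in> gen_alg emb G \<Longrightarrow> y \<in> gen_alg emb G \<Longrightarrow> x + y \<in> gen_alg emb G"
| mult: "x \<in> gen_alg emb G \<Longrightarrow> y \<in> gen_alg emb G \<Longrightarrow> x * y \<in> gen_alg emb G"

abbreviation cq :: "real \<Rightarrow> complex" where "cq r \<equiv> complex_of_real r"

text \<open>kK, kKi, kE, kF are the actions of the generators K, K^{-1}, E, F;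
  st is the star operation.\<close>

definition SUq2_setting ::
  "real \<Rightarrow> (complex \<Rightarrow> 'a::ring_1) \<Rightarrow> ('a \<Rightarrow> 'a) \<Rightarrow> 'a \<Rightarrow> 'a \<Rightarrow>
   ('a \<Rightarrow> 'a) \<Rightarrow> ('a \<Rightarrow> 'a) \<Rightarrow> ('a \<Rightarrow> 'a) \<Rightarrow> ('a \<Rightarrow> 'a) \<Rightarrow> bool" where
  "SUq2_setting q emb st a c kK kKi kE kF \<longleftrightarrow>
     0 < q \<and> q < 1 \<and> complex_alg emb \<and>
     \<comment> \<open>star structure\<close>
     (\<forall>x y. st (x + y) = st x + st y) \<and> (\<forall>x y. st (x * y) = st y * st x) \<and>
     (\<forall>z x. st (emb z * x) = emb (cnj z) * st x) \<and> (\<forall>x. st (st x) = x) \<and>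
     \<comment> \<open>defining relations of A(SU_q(2))\<close>
     a * c = emb (cq q) * c * a \<and> a * st c = emb (cq q) * st c * a \<and> c * st c = st c * c \<and>
     st a * a + st c * c = 1 \<and> a * st a + emb (cq (q^2)) * c * st c = 1 \<and>
     \<comment> \<open>generated by a, c (as a *-algebra)\<close>
     (\<forall>x. x \<in> gen_alg emb {a, c, st a, st c}) \<and>
     \<comment> \<open>the generators of U_q(su(2)) act by linear maps satisfying the relations\<close>
     clin emb kK \<and> clin emb kKi \<and> clin emb kE \<and> clin emb kF \<and>
     (\<forall>x. kK (kKi x) = x) \<and> (\<forall>x. kKi (kK x) = x) \<and>
     (\<forall>x. kK (kE x) = emb (cq q) * kE (kK x)) \<and>
     (\<forall>x. kK (kF x) = emb (cq (1/q)) * kF (kK x)) \<and>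
     (\<forall>x. kE (kF x) - kF (kE x) = emb (cq (1 / (q - 1/q))) * (kK (kK x) - kKi (kKi x))) \<and>
     \<comment> \<open>module algebra w.r.t. the coproduct and counit\<close>
     (\<forall>x y. kK (x * y) = kK x * kK y) \<and> kK 1 = 1 \<and>
     (\<forall>x y. kKi (x * y) = kKi x * kKi y) \<and> kKi 1 = 1 \<and>
     (\<forall>x y. kE (x * y) = kE x * kK y + kKi x * kE y) \<and> kE 1 = 0 \<and>
     (\<forall>x y. kF (x * y) = kF x * kK y + kKi x * kF y) \<and> kF 1 = 0 \<and>
     \<comment> \<open>action on the generators\<close>
     kK a = emb (cq (q powr (-1/2))) * a \<and> kK c = emb (cq (q powr (-1/2))) * c \<and>
     kK (st a) = emb (cq (q powr (1/2))) * st a \<and> kK (st c) = emb (cq (q powr (1/2))) * st c \<and>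
     kE a = - (emb (cq q) * st c) \<and> kE c = st a \<and> kE (st a) = 0 \<and> kE (st c) = 0 \<and>
     kF a = 0 \<and> kF c = 0 \<and> kF (st a) = c \<and> kF (st c) = - (emb (cq (1/q)) * a)"

definition Lsp :: "real \<Rightarrow> (complex \<Rightarrow> 'a::ring_1) \<Rightarrow> ('a \<Rightarrow> 'a) \<Rightarrow> int \<Rightarrow> 'a set" where
  "Lsp q emb kK n = {x. kK x = emb (cq (q powr (real_of_int n / 2))) * x}"

definition Xminus :: "real \<Rightarrow> (complex \<Rightarrow> 'a::ring_1) \<Rightarrow> ('a \<Rightarrow> 'a) \<Rightarrow> ('a \<Rightarrow> 'a) \<Rightarrow> 'a \<Rightarrow> 'a" where
  "Xminus q emb kK kF x = emb (cq (q powr (-1/2))) * kF (kK x)"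

text \<open>An element (yp, ym, yz) stands for yp omega_+ + ym omega_- + yz omega_z
  (free left module with basis omega_+, omega_-, omega_z).\<close>

type_synonym 'a omega1 = "'a \<times> 'a \<times> 'a"

definition om_lmul :: "'a::ring_1 \<Rightarrow> 'a omega1 \<Rightarrow> 'a omega1" where
  "om_lmul x w = (x * fst w, x * fst (snd w), x * snd (snd w))"

text \<open>right multiplication by a homogeneous element x of L_k:
  omega_pm x = q^k x omega_pm, omega_z x = q^(2k) x omega_z\<close>
definition om_rmul :: "real \<Rightarrow> (complex \<Rightarrow> 'a::ring_1) \<Rightarrow> ('a \<Rightarrow> 'a) \<Rightarrow> 'a omega1 \<Rightarrow> 'a \<Rightarrow> 'a omega1" where
  "om_rmul q emb kK w x =
     (let k = (SOME k. x \<in> Lsp q emb kK k) in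
       (emb (cq (q powr real_of_int k)) * fst w * x,
        emb (cq (q powr real_of_int k)) * fst (snd w) * x,
        emb (cq (q powr real_of_int (2 * k))) * snd (snd w) * x))"

definition omega_minus :: "'a::ring_1 omega1" where
  "omega_minus = (0, 1, 0)"

definition Om01 :: "real \<Rightarrow> (complex \<Rightarrow> 'a::ring_1) \<Rightarrow> ('a \<Rightarrow> 'a) \<Rightarrow> 'a omega1 set" where
  "Om01 q emb kK = (\<lambda>x. om_lmul x omega_minus) ` Lsp q emb kK (-2)"

definition dbar :: "real \<Rightarrow> (complex \<Rightarrow> 'a::ring_1) \<Rightarrow> ('a \<Rightarrow> 'a) \<Rightarrow> ('a \<Rightarrow> 'a) \<Rightarrow> 'a \<Rightarrow> 'a omega1" where
  "dbar q emb kK kF f = om_lmul (Xminus q emb kK kF f) omega_minus"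

text \<open>M (with right B-action ract) and N (with left B-action lact) are additive subgroups
  of abelian groups; M \<otimes>_B N is the free abelian group on M \<times> N modulo the subgroup
  generated by biadditivity and B-balancing relations (over B \<supseteq> \<complex>, this is the
  usual \<complex>-linear balanced tensor product). Elements are equivalence classes of
  finitely supported integer-valued functions on M \<times> N.\<close>

definition fsums :: "'m set \<Rightarrow> 'n set \<Rightarrow> ('m \<times> 'n \<Rightarrow> int) set" where
  "fsums M N = {u. finite {p. u p \<noteq> 0} \<and> {p. u p \<noteq> 0} \<subseteq> M \<times> N}"

definition dl :: "'m \<Rightarrow> 'n \<Rightarrow> ('m \<times> 'n \<Rightarrow> int)" where
  "dl m n = (\<lambda>p. if p = (m, n) then 1 else 0)"

inductive_set trel :: "'m::ab_group_add set \<Rightarrow> ('m \<Rightarrow> 'b \<Rightarrow> 'm) \<Rightarrow> 'n::ab_group_add set \<Rightarrow>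
    ('b \<Rightarrow> 'n \<Rightarrow> 'n) \<Rightarrow> 'b set \<Rightarrow> ('m \<times> 'n \<Rightarrow> int) set"
  for M ract N lact B where
  zero: "(\<lambda>p. 0) \<in> trel M ract N lact B"
| add: "u \<in> trel M ract N lact B \<Longrightarrow> v \<in> trel M ract N lact B \<Longrightarrow> (\<lambda>p. u p + v p) \<in> trel M ract N lact B"
| neg: "u \<in> trel M ract N lact B \<Longrightarrow> (\<lambda>p. - u p) \<in> trel M ract N lact B"
| addl: "m \<in> M \<Longrightarrow> m' \<in> M \<Longrightarrow> n \<in> N \<Longrightarrow>
          (\<lambda>p. dl (m + m') n p - dl m n p - dl m' n p) \<in> trel M ract N lact B"
| addr: "m \<in> M \<Longrightarrow> n \<in> N \<Longrightarrow> n' \<in> N \<Longrightarrow>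
          (\<lambda>p. dl m (n + n') p - dl m n p - dl m n' p) \<in> trel M ract N lact B"
| bal: "m \<in> M \<Longrightarrow> n \<in> N \<Longrightarrow> b \<in> B \<Longrightarrow>
          (\<lambda>p. dl (ract m b) n p - dl m (lact b n) p) \<in> trel M ract N lact B"

definition tcls :: "'m::ab_group_add set \<Rightarrow> ('m \<Rightarrow> 'b \<Rightarrow> 'm) \<Rightarrow> 'n::ab_group_add set \<Rightarrow>
    ('b \<Rightarrow> 'n \<Rightarrow> 'n) \<Rightarrow> 'b set \<Rightarrow> ('m \<times> 'n \<Rightarrow> int) \<Rightarrow> ('m \<times> 'n \<Rightarrow> int) set" where
  "tcls M ract N lact B u = {v \<in> fsums M N. (\<lambda>p. u p - v p) \<in> trel M ract N lact B}"

definition tensor :: "'m::ab_group_add set \<Rightarrow> ('m \<Rightarrow> 'b \<Rightarrow> 'm) \<Rightarrow> 'n::ab_group_add set \<Rightarrow>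
    ('b \<Rightarrow> 'n \<Rightarrow> 'n) \<Rightarrow> 'b set \<Rightarrow> ('m \<times> 'n \<Rightarrow> int) set set" where
  "tensor M ract N lact B = tcls M ract N lact B ` fsums M N"

definition ptens where
  "ptens M ract N lact B m n = tcls M ract N lact B (dl m n)"

definition trep :: "('m \<times> 'n \<Rightarrow> int) set \<Rightarrow> ('m \<times> 'n \<Rightarrow> int)" where
  "trep C = (SOME u. u \<in> C)"

definition tadd where
  "tadd M ract N lact B C D = tcls M ract N lact B (\<lambda>p. trep C p + trep D p)"

text \<open>right multiplication by f acting on the second tensor factor\<close>
definition rmul_fs :: "('m \<times> 'n \<Rightarrow> int) \<Rightarrow> ('n \<Rightarrow> 'n) \<Rightarrow> ('m \<times> 'n \<Rightarrow> int)" where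
  "rmul_fs u g = (\<lambda>(m, n'). \<Sum>n\<in>{n. u (m, n) \<noteq> 0 \<and> g n = n'}. u (m, n))"

definition tract_right where
  "tract_right M ract N lact B C g = tcls M ract N lact B (rmul_fs (trep C) g)"

definition zsm :: "int \<Rightarrow> 'c::ab_group_add \<Rightarrow> 'c" where
  "zsm k x = (if 0 \<le> k then (\<Sum>i<nat k. x) else - (\<Sum>i<nat (- k). x))"

text \<open>the map on M \<otimes>_B N induced by a biadditive balanced map beta\<close>
definition tlin :: "('m \<Rightarrow> 'n \<Rightarrow> 'c::ab_group_add) \<Rightarrow> ('m \<times> 'n \<Rightarrow> int) set \<Rightarrow> 'c" where
  "tlin beta C = (let u = trep C in \<Sum>p\<in>{p. u p \<noteq> 0}. zsm (u p) (beta (fst p) (snd p)))"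

abbreviation Bsp where "Bsp q emb kK \<equiv> Lsp q emb kK 0"

abbreviation tensOL where
  "tensOL q emb kK n \<equiv> tensor (Om01 q emb kK) (om_rmul q emb kK) (Lsp q emb kK n) (*) (Bsp q emb kK)"

abbreviation tensLO where
  "tensLO q emb kK n \<equiv> tensor (Lsp q emb kK n) (*) (Om01 q emb kK) om_lmul (Bsp q emb kK)"

definition mu1 :: "('a::ring_1 \<times> 'a omega1 \<Rightarrow> int) set \<Rightarrow> 'a omega1" where
  "mu1 C = tlin (\<lambda>x w. om_lmul x w) C"

definition mu2 :: "real \<Rightarrow> (complex \<Rightarrow> 'a::ring_1) \<Rightarrow> ('a \<Rightarrow> 'a) \<Rightarrow> ('a omega1 \<times> 'a \<Rightarrow> int) set \<Rightarrow> 'a omega1" where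
  "mu2 q emb kK C = tlin (\<lambda>w x. om_rmul q emb kK w x) C"

definition Phi where
  "Phi q emb kK n C = (THE D. D \<in> tensOL q emb kK n \<and> mu2 q emb kK D = mu1 C)"

definition nablabar where
  "nablabar q emb kK kF n phi =
     (THE D. D \<in> tensOL q emb kK n \<and>
        mu2 q emb kK D = om_lmul (Xminus q emb kK kF phi) omega_minus)"

end

theory Submission
  imports Defs
begin


lemma zsm_ring: "zsm k (x::'a::ring_1) = of_int k * x"
  by (simp add: zsm_def)

lemma fst_zsm: "fst (zsm k (w::'b::ab_group_add \<times> 'c::ab_group_add)) = zsm k (fst w)"
  by (simp add: zsm_def fst_sum)
lemma snd_zsm: "snd (zsm k (w::'b::ab_group_add \<times> 'c::ab_group_add)) = zsm k (snd w)"
  by (simp add: zsm_def snd_sum)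

lemma zsm_trip: "zsm k (w::'a::ring_1 omega1) =
   (of_int k * fst w, of_int k * fst (snd w), of_int k * snd (snd w))"
  by (simp add: prod_eq_iff fst_zsm snd_zsm zsm_ring)

definition lsum :: "('m \<Rightarrow> 'n \<Rightarrow> 'a::ring_1 omega1) \<Rightarrow> ('m \<times> 'n \<Rightarrow> int) \<Rightarrow> 'a omega1" where
  "lsum \<beta> u = (\<Sum>p\<in>{p. u p \<noteq> 0}. zsm (u p) (\<beta> (fst p) (snd p)))"

lemma zsm0[simp]: "zsm 0 (w::'a::ring_1 omega1) = 0" by (simp add: zsm_trip zero_prod_def)
lemma zsm1[simp]: "zsm 1 (w::'a::ring_1 omega1) = w" by (simp add: zsm_trip)
lemma zsm_add: "zsm (k + l) (w::'a::ring_1 omega1) = zsm k w + zsm l w"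
  by (simp add: zsm_trip distrib_right)
lemma zsm_neg: "zsm (- k) (w::'a::ring_1 omega1) = - zsm k w"
  by (simp add: zsm_trip)
lemma zsm_sum: "finite I \<Longrightarrow> zsm (\<Sum>i\<in>I. f i) (w::'a::ring_1 omega1) = (\<Sum>i\<in>I. zsm (f i) w)"
  by (induction I rule: finite_induct) (auto simp: zsm_add)

lemma lsum_superset: "finite S \<Longrightarrow> {p. u p \<noteq> 0} \<subseteq> S \<Longrightarrow>
   lsum \<beta> u = (\<Sum>p\<in>S. zsm (u p) (\<beta> (fst p) (snd p)))"
  unfolding lsum_def by (rule sum.mono_neutral_left) auto

lemma lsum_add: "finite {p. u p \<noteq> 0} \<Longrightarrow> finite {p. v p \<noteq> 0} \<Longrightarrow>
   lsum \<beta> (\<lambda>p. u p + v p) = lsum \<beta> u + lsum \<beta> v"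
proof -
  assume fu: "finite {p. u p \<noteq> 0}" and fv: "finite {p. v p \<noteq> 0}"
  let ?S = "{p. u p \<noteq> 0} \<union> {p. v p \<noteq> 0}"
  have f: "finite ?S" using fu fv by simp
  have "lsum \<beta> (\<lambda>p. u p + v p) = (\<Sum>p\<in>?S. zsm (u p + v p) (\<beta> (fst p) (snd p)))"
    by (rule lsum_superset[OF f]) auto
  also have "\<dots> = (\<Sum>p\<in>?S. zsm (u p) (\<beta> (fst p) (snd p))) + (\<Sum>p\<in>?S. zsm (v p) (\<beta> (fst p) (snd p)))"
    by (simp add: zsm_add sum.distrib)
  also have "\<dots> = lsum \<beta> u + lsum \<beta> v"
    using lsum_superset[OF f, of u \<beta>] lsum_superset[OF f, of v \<beta>] by auto
  finally show ?thesis .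
qed

lemma lsum_neg: "lsum \<beta> (\<lambda>p. - u p) = - lsum \<beta> u"
  unfolding lsum_def by (simp add: zsm_neg sum_negf)

lemma dl_supp: "{p. dl m n p \<noteq> 0} = {(m, n)}"
  by (auto simp: dl_def)

lemma lsum_dl: "lsum \<beta> (dl m n) = \<beta> m n"
  unfolding lsum_def dl_supp by (simp add: dl_def)

lemma lsum_zero: "lsum \<beta> (\<lambda>p. 0) = 0"
  unfolding lsum_def by simp

lemma supp_sum_sub: "{p. (\<Sum>i\<in>I. f i p) \<noteq> (0::int)} \<subseteq> (\<Union>i\<in>I. {p. f i p \<noteq> 0})"
  by (auto elim: sum.not_neutral_contains_not_neutral)

lemma fin_supp_sum: "finite I \<Longrightarrow> (\<And>i. i \<in> I \<Longrightarrow> finite {p. f i p \<noteq> (0::int)}) \<Longrightarrow>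
   finite {p. (\<Sum>i\<in>I. f i p) \<noteq> 0}"
  by (rule finite_subset[OF supp_sum_sub]) auto

lemma lsum_sum: "finite I \<Longrightarrow> (\<And>i. i \<in> I \<Longrightarrow> finite {p. f i p \<noteq> (0::int)}) \<Longrightarrow>
   lsum \<beta> (\<lambda>p. \<Sum>i\<in>I. f i p) = (\<Sum>i\<in>I. lsum \<beta> (f i))"
proof (induction I rule: finite_induct)
  case empty thus ?case by (simp add: lsum_zero)
next
  case (insert i I)
  have "lsum \<beta> (\<lambda>p. \<Sum>i\<in>insert i I. f i p) = lsum \<beta> (\<lambda>p. f i p + (\<Sum>i\<in>I. f i p))"
    using insert by simp
  also have "\<dots> = lsum \<beta> (f i) + lsum \<beta> (\<lambda>p. \<Sum>i\<in>I. f i p)"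
    using insert by (intro lsum_add) (auto intro: fin_supp_sum)
  finally show ?case using insert by simp
qed

lemma trel_fin: "u \<in> trel M ract N lact B \<Longrightarrow> finite {p. u p \<noteq> 0}"
proof (induction rule: trel.induct)
  case (add u v)
  have "{p. u p + v p \<noteq> 0} \<subseteq> {p. u p \<noteq> 0} \<union> {p. v p \<noteq> 0}" by auto
  thus ?case using add.IH finite_subset by blast
next
  case (addl m m' n)
  show ?case by (rule finite_subset[of _ "{(m+m',n),(m,n),(m',n)}"]) (auto simp: dl_def)
next
  case (addr m n n')
  show ?case by (rule finite_subset[of _ "{(m,n+n'),(m,n),(m,n')}"]) (auto simp: dl_def)
next
  case (bal m n b)
  show ?case by (rule finite_subset[of _ "{(ract m b,n),(m,lact b n)}"]) (auto simp: dl_def)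
qed auto

lemma lsum_diff: "finite {p. u p \<noteq> 0} \<Longrightarrow> finite {p. v p \<noteq> 0} \<Longrightarrow>
   lsum \<beta> (\<lambda>p. u p - v p) = lsum \<beta> u - lsum \<beta> v"
  using lsum_add[of u "\<lambda>p. - v p" \<beta>] lsum_neg[of \<beta> v] by simp

lemma fin_dl: "finite {p. dl m n p \<noteq> 0}" by (simp add: dl_supp)
lemma fin_dl2: "finite {p. dl m n p - dl m' n' p \<noteq> 0}"
  by (rule finite_subset[of _ "{(m,n),(m',n')}"]) (auto simp: dl_def)

lemma lsum_trel:
  assumes L: "\<And>m m' n. m \<in> M \<Longrightarrow> m' \<in> M \<Longrightarrow> n \<in> N \<Longrightarrow> \<beta> (m + m') n = \<beta> m n + \<beta> m' n"
    and R: "\<And>m n n'. m \<in> M \<Longrightarrow> n \<in> N \<Longrightarrow> n' \<in> N \<Longrightarrow> \<beta> m (n + n') = \<beta> m n + \<beta> m n'"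
    and Bl: "\<And>m n b. m \<in> M \<Longrightarrow> n \<in> N \<Longrightarrow> b \<in> B \<Longrightarrow> \<beta> (ract m b) n = \<beta> m (lact b n)"
  shows "u \<in> trel M ract N lact B \<Longrightarrow> lsum \<beta> u = 0"
proof (induction rule: trel.induct)
  case zero thus ?case by (simp add: lsum_zero)
next
  case (add u v) thus ?case by (simp add: lsum_add trel_fin)
next
  case (neg u) thus ?case by (simp add: lsum_neg)
next
  case (addl m m' n)
  have "lsum \<beta> (\<lambda>p. dl (m + m') n p - dl m n p - dl m' n p) =
      lsum \<beta> (dl (m + m') n) - lsum \<beta> (dl m n) - lsum \<beta> (dl m' n)"
    by (simp only: lsum_diff[OF fin_dl2 fin_dl] lsum_diff[OF fin_dl fin_dl])
  thus ?case using L[OF addl] by (simp add: lsum_dl)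
next
  case (addr m n n')
  have "lsum \<beta> (\<lambda>p. dl m (n + n') p - dl m n p - dl m n' p) =
      lsum \<beta> (dl m (n + n')) - lsum \<beta> (dl m n) - lsum \<beta> (dl m n')"
    by (simp only: lsum_diff[OF fin_dl2 fin_dl] lsum_diff[OF fin_dl fin_dl])
  thus ?case using R[OF addr] by (simp add: lsum_dl)
next
  case (bal m n b)
  have "lsum \<beta> (\<lambda>p. dl (ract m b) n p - dl m (lact b n) p) =
      lsum \<beta> (dl (ract m b) n) - lsum \<beta> (dl m (lact b n))"
    by (simp only: lsum_diff[OF fin_dl fin_dl])
  thus ?case using Bl[OF bal] by (simp add: lsum_dl)
qed


definition teq where
  "teq M ract N lact B u v \<longleftrightarrow> (\<lambda>p. u p - v p) \<in> trel M ract N lact B"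

lemma trel_diff: "u \<in> trel M ract N lact B \<Longrightarrow> v \<in> trel M ract N lact B \<Longrightarrow>
   (\<lambda>p. u p - v p) \<in> trel M ract N lact B"
  using trel.add[OF _ trel.neg, of u M ract N lact B v] by simp

lemma trel_cong: "u \<in> trel M ract N lact B \<Longrightarrow> u = v \<Longrightarrow> v \<in> trel M ract N lact B" by simp

lemma teq_refl: "teq M ract N lact B u u"
  unfolding teq_def using trel.zero by simp

lemma teq_sym: "teq M ract N lact B u v \<Longrightarrow> teq M ract N lact B v u"
  unfolding teq_def using trel.neg by fastforce

lemma teq_trans: "teq M ract N lact B u v \<Longrightarrow> teq M ract N lact B v w \<Longrightarrow> teq M ract N lact B u w"
  unfolding teq_def using trel.add by fastforce

lemma teq_add: "teq M ract N lact B u u' \<Longrightarrow> teq M ract N lact B v v' \<Longrightarrow>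
   teq M ract N lact B (\<lambda>p. u p + v p) (\<lambda>p. u' p + v' p)"
  unfolding teq_def using trel.add[of "\<lambda>p. u p - u' p" M ract N lact B "\<lambda>p. v p - v' p"]
  by (simp add: algebra_simps)

lemma trel_nat_smul: "u \<in> trel M ract N lact B \<Longrightarrow> (\<lambda>p. int k * u p) \<in> trel M ract N lact B"
proof (induction k)
  case 0 thus ?case using trel.zero by simp
next
  case (Suc k)
  have "(\<lambda>p. int k * u p + u p) \<in> trel M ract N lact B" using trel.add Suc by blast
  thus ?case by (simp add: algebra_simps)
qed

lemma trel_smul: "u \<in> trel M ract N lact B \<Longrightarrow> (\<lambda>p. k * u p) \<in> trel M ract N lact B"
proof (cases "k \<ge> 0")
  case True
  assume u: "u \<in> trel M ract N lact B"
  thus ?thesis using trel_nat_smul[OF u, of "nat k"] True by simp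
next
  case False
  assume u: "u \<in> trel M ract N lact B"
  have "(\<lambda>p. - (int (nat (-k)) * u p)) \<in> trel M ract N lact B"
    using trel.neg[OF trel_nat_smul[OF u]] by blast
  thus ?thesis using False by simp
qed

lemma teq_smul: "teq M ract N lact B u v \<Longrightarrow>
   teq M ract N lact B (\<lambda>p. k * u p) (\<lambda>p. k * v p)"
  unfolding teq_def using trel_smul[of "\<lambda>p. u p - v p" M ract N lact B k]
  by (simp add: algebra_simps)

lemma teq_sum: "finite I \<Longrightarrow> (\<And>i. i \<in> I \<Longrightarrow> teq M ract N lact B (f i) (g i)) \<Longrightarrow>
   teq M ract N lact B (\<lambda>p. \<Sum>i\<in>I. f i p) (\<lambda>p. \<Sum>i\<in>I. g i p)"
proof (induction I rule: finite_induct)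
  case empty thus ?case by (simp add: teq_refl)
next
  case (insert i I)
  have "teq M ract N lact B (\<lambda>p. f i p + (\<Sum>i\<in>I. f i p)) (\<lambda>p. g i p + (\<Sum>i\<in>I. g i p))"
    using insert by (intro teq_add) auto
  thus ?case using insert by simp
qed

lemma teq_eq: "u = v \<Longrightarrow> teq M ract N lact B u v" using teq_refl by simp

lemma dl_addl: "m \<in> M \<Longrightarrow> m' \<in> M \<Longrightarrow> n \<in> N \<Longrightarrow>
   teq M ract N lact B (dl (m + m') n) (\<lambda>p. dl m n p + dl m' n p)"
  unfolding teq_def using trel.addl[of m M m' n N ract lact B] by (simp add: algebra_simps)

lemma dl_addr: "m \<in> M \<Longrightarrow> n \<in> N \<Longrightarrow> n' \<in> N \<Longrightarrow>
   teq M ract N lact B (dl m (n + n')) (\<lambda>p. dl m n p + dl m n' p)"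
  unfolding teq_def using trel.addr[of m M n N n' ract lact B] by (simp add: algebra_simps)

lemma dl_bal: "m \<in> M \<Longrightarrow> n \<in> N \<Longrightarrow> b \<in> B \<Longrightarrow>
   teq M ract N lact B (dl (ract m b) n) (dl m (lact b n))"
  unfolding teq_def using trel.bal[of m M n N b B ract lact] by simp

lemma dl_zero_r: "m \<in> M \<Longrightarrow> 0 \<in> N \<Longrightarrow> teq M ract N lact B (dl m 0) (\<lambda>p. 0)"
proof -
  assume "m \<in> M" "0 \<in> N"
  hence "(\<lambda>p. - (dl m (0 + 0) p - dl m 0 p - dl m 0 p)) \<in> trel M ract N lact B"
    using trel.neg trel.addr by blast
  thus ?thesis unfolding teq_def by simp
qed

lemma dl_zero_l: "0 \<in> M \<Longrightarrow> n \<in> N \<Longrightarrow> teq M ract N lact B (dl 0 n) (\<lambda>p. 0)"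
proof -
  assume "0 \<in> M" "n \<in> N"
  hence "(\<lambda>p. - (dl (0 + 0) n p - dl 0 n p - dl 0 n p)) \<in> trel M ract N lact B"
    using trel.neg trel.addl by blast
  thus ?thesis unfolding teq_def by simp
qed

lemma sum_in:
  assumes "finite J" "\<And>j. j \<in> J \<Longrightarrow> n j \<in> N" "0 \<in> N"
    "\<And>x y. x \<in> N \<Longrightarrow> y \<in> N \<Longrightarrow> x + y \<in> N"
  shows "(\<Sum>j\<in>J. n j) \<in> N"
  using assms(1,2) by (induction J rule: finite_induct) (auto intro: assms(3,4))

lemma dl_sumr:
  assumes "finite J" "m \<in> M" "\<And>j. j \<in> J \<Longrightarrow> n j \<in> N" "0 \<in> N"
    "\<And>x y. x \<in> N \<Longrightarrow> y \<in> N \<Longrightarrow> x + y \<in> N"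
  shows "teq M ract N lact B (dl m (\<Sum>j\<in>J. n j)) (\<lambda>p. \<Sum>j\<in>J. dl m (n j) p)"
  using assms(1,3)
proof (induction J rule: finite_induct)
  case empty thus ?case using dl_zero_r[OF assms(2,4)] by simp
next
  case (insert j J)
  have sN: "(\<Sum>j\<in>J. n j) \<in> N"
    by (rule sum_in[OF insert.hyps(1)]) (auto simp: insert.prems assms)
  have "teq M ract N lact B (dl m (n j + (\<Sum>j\<in>J. n j))) (\<lambda>p. dl m (n j) p + dl m (\<Sum>j\<in>J. n j) p)"
    using sN by (intro dl_addr) (auto simp: insert.prems assms(2))
  moreover have "teq M ract N lact B (\<lambda>p. dl m (n j) p + dl m (\<Sum>j\<in>J. n j) p)
      (\<lambda>p. dl m (n j) p + (\<Sum>j\<in>J. dl m (n j) p))"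
    using insert by (intro teq_add teq_refl) auto
  ultimately have "teq M ract N lact B (dl m (n j + (\<Sum>j\<in>J. n j))) (\<lambda>p. dl m (n j) p + (\<Sum>j\<in>J. dl m (n j) p))"
    by (rule teq_trans)
  thus ?case using insert by simp
qed

lemma dl_suml:
  assumes "finite J" "n \<in> N" "\<And>j. j \<in> J \<Longrightarrow> m j \<in> M" "0 \<in> M"
    "\<And>x y. x \<in> M \<Longrightarrow> y \<in> M \<Longrightarrow> x + y \<in> M"
  shows "teq M ract N lact B (dl (\<Sum>j\<in>J. m j) n) (\<lambda>p. \<Sum>j\<in>J. dl (m j) n p)"
  using assms(1,3)
proof (induction J rule: finite_induct)
  case empty thus ?case using dl_zero_l[OF assms(4,2)] by simp
next
  case (insert j J)
  have sM: "(\<Sum>j\<in>J. m j) \<in> M"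
    by (rule sum_in[OF insert.hyps(1)]) (auto simp: insert.prems assms)
  have "teq M ract N lact B (dl (m j + (\<Sum>j\<in>J. m j)) n) (\<lambda>p. dl (m j) n p + dl (\<Sum>j\<in>J. m j) n p)"
    using sM by (intro dl_addl) (auto simp: insert.prems assms(2))
  moreover have "teq M ract N lact B (\<lambda>p. dl (m j) n p + dl (\<Sum>j\<in>J. m j) n p)
      (\<lambda>p. dl (m j) n p + (\<Sum>j\<in>J. dl (m j) n p))"
    using insert by (intro teq_add teq_refl) auto
  ultimately have "teq M ract N lact B (dl (m j + (\<Sum>j\<in>J. m j)) n) (\<lambda>p. dl (m j) n p + (\<Sum>j\<in>J. dl (m j) n p))"
    by (rule teq_trans)
  thus ?case using insert by simp
qed

lemma dl_neg:
  assumes "m \<in> M" "n \<in> N" "0 \<in> M" "- m \<in> M"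
  shows "teq M ract N lact B (dl (- m) n) (\<lambda>p. - dl m n p)"
proof -
  have h1: "teq M ract N lact B (dl 0 n) (\<lambda>p. dl m n p + dl (- m) n p)"
    using dl_addl[of m M "- m" n N ract lact B] assms by simp
  have h2: "teq M ract N lact B (dl 0 n) (\<lambda>p. 0)" by (rule dl_zero_l[OF assms(3,2)])
  have "teq M ract N lact B (\<lambda>p. dl m n p + dl (- m) n p) (\<lambda>p. 0)"
    using teq_trans[OF teq_sym[OF h1] h2] .
  hence "(\<lambda>p. dl m n p + dl (- m) n p) \<in> trel M ract N lact B" unfolding teq_def by simp
  thus ?thesis unfolding teq_def by (simp add: algebra_simps)
qed

lemma dl_zsm:
  assumes "m \<in> M" "n \<in> N" "0 \<in> M"
    "\<And>x y. x \<in> M \<Longrightarrow> y \<in> M \<Longrightarrow> x + y \<in> M" "\<And>x. x \<in> M \<Longrightarrow> - x \<in> M"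
  shows "teq M ract N lact B (dl (zsm k m) n) (\<lambda>p. k * dl m n p)"
proof -
  have nat: "teq M ract N lact B (dl (\<Sum>i<j. m) n) (\<lambda>p. int j * dl m n p)" for j
  proof -
    have "teq M ract N lact B (dl (\<Sum>i<j. m) n) (\<lambda>p. \<Sum>i<j. dl m n p)"
      using assms by (intro dl_suml) auto
    thus ?thesis by simp
  qed
  have sM: "(\<Sum>i<j. m) \<in> M" for j :: nat
    by (induction j) (auto intro: assms)
  show ?thesis
  proof (cases "0 \<le> k")
    case True thus ?thesis using nat[of "nat k"] by (simp add: zsm_def)
  next
    case False
    have "teq M ract N lact B (dl (- (\<Sum>i<nat (-k). m)) n) (\<lambda>p. - dl (\<Sum>i<nat (-k). m) n p)"
      using assms sM by (intro dl_neg) auto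
    moreover have "teq M ract N lact B (\<lambda>p. - dl (\<Sum>i<nat (-k). m) n p) (\<lambda>p. (-1) * (int (nat (-k)) * dl m n p))"
      using teq_smul[OF nat[of "nat (-k)"], of "-1"] by simp
    ultimately have "teq M ract N lact B (dl (- (\<Sum>i<nat (-k). m)) n) (\<lambda>p. (-1) * (int (nat (-k)) * dl m n p))"
      by (rule teq_trans)
    thus ?thesis using False by (simp add: zsm_def)
  qed
qed

lemma tcls_eq: "teq M ract N lact B u v \<Longrightarrow> tcls M ract N lact B u = tcls M ract N lact B v"
  unfolding tcls_def
proof (intro Collect_cong conj_cong refl iffI)
  fix w assume "teq M ract N lact B u v" "(\<lambda>p. u p - w p) \<in> trel M ract N lact B"
  thus "(\<lambda>p. v p - w p) \<in> trel M ract N lact B"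
    using teq_trans[OF teq_sym] unfolding teq_def by blast
next
  fix w assume "teq M ract N lact B u v" "(\<lambda>p. v p - w p) \<in> trel M ract N lact B"
  thus "(\<lambda>p. u p - w p) \<in> trel M ract N lact B"
    using teq_trans unfolding teq_def by blast
qed

lemma in_tcls: "u \<in> fsums M N \<Longrightarrow> u \<in> tcls M ract N lact B u"
  unfolding tcls_def using trel.zero by simp

lemma trep_tcls: "u \<in> fsums M N \<Longrightarrow> trep (tcls M ract N lact B u) \<in> tcls M ract N lact B u"
proof -
  assume "u \<in> fsums M N"
  hence "u \<in> tcls M ract N lact B u" by (rule in_tcls)
  thus ?thesis unfolding trep_def by (rule someI[of "\<lambda>v. v \<in> tcls M ract N lact B u"])
qed

lemma trep_fsums: "u \<in> fsums M N \<Longrightarrow> trep (tcls M ract N lact B u) \<in> fsums M N"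
  using trep_tcls unfolding tcls_def by blast

lemma trep_teq: "u \<in> fsums M N \<Longrightarrow> teq M ract N lact B u (trep (tcls M ract N lact B u))"
  using trep_tcls unfolding tcls_def teq_def by blast

lemma tcls_trep: "u \<in> fsums M N \<Longrightarrow> tcls M ract N lact B (trep (tcls M ract N lact B u)) = tcls M ract N lact B u"
  using tcls_eq[OF teq_sym[OF trep_teq]] by blast

lemma fsums_fin: "u \<in> fsums M N \<Longrightarrow> finite {p. u p \<noteq> 0}" unfolding fsums_def by blast

lemma tlin_lsum: "tlin \<beta> C = lsum \<beta> (trep C)"
  unfolding tlin_def lsum_def Let_def by (rule refl)

lemma tlin_tcls:
  assumes L: "\<And>m m' n. m \<in> M \<Longrightarrow> m' \<in> M \<Longrightarrow> n \<in> N \<Longrightarrow> \<beta> (m + m') n = \<beta> m n + \<beta> m' n"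
    and R: "\<And>m n n'. m \<in> M \<Longrightarrow> n \<in> N \<Longrightarrow> n' \<in> N \<Longrightarrow> \<beta> m (n + n') = \<beta> m n + \<beta> m n'"
    and Bl: "\<And>m n b. m \<in> M \<Longrightarrow> n \<in> N \<Longrightarrow> b \<in> B \<Longrightarrow> \<beta> (ract m b) n = \<beta> m (lact b n)"
    and u: "u \<in> fsums M N"
  shows "tlin \<beta> (tcls M ract N lact B u) = lsum \<beta> u"
proof -
  let ?v = "trep (tcls M ract N lact B u)"
  have v: "?v \<in> fsums M N" using trep_fsums[OF u] .
  have "lsum \<beta> (\<lambda>p. u p - ?v p) = 0"
  proof (rule lsum_trel[where M=M and N=N and \<beta>=\<beta> and ract=ract and lact=lact and B=B, OF L R Bl])
    show "(\<lambda>p. u p - ?v p) \<in> trel M ract N lact B" using trep_teq[OF u] unfolding teq_def .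
  qed
  hence "lsum \<beta> u = lsum \<beta> ?v" using lsum_diff[OF fsums_fin[OF u] fsums_fin[OF v], of \<beta>] by simp
  thus ?thesis unfolding tlin_lsum by simp
qed


locale suq =
  fixes q :: real and emb :: "complex \<Rightarrow> 'a::ring_1" and st :: "'a \<Rightarrow> 'a"
    and a c :: 'a and kK kKi kE kF :: "'a \<Rightarrow> 'a"
  assumes S: "SUq2_setting q emb st a c kK kKi kE kF"
begin

lemmas SS = S[unfolded SUq2_setting_def complex_alg_def clin_def]

lemma q0: "0 < q"
  using SS by (elim conjE allE) assumption

lemma q1: "q < 1"
  using SS by (elim conjE allE) assumption

lemma emb1: "emb 1 = 1"
  using SS by (elim conjE allE) assumption

lemma emb_add: "emb (x + y) = emb x + emb y"
  using SS by (elim conjE allE) assumption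

lemma emb_mult: "emb (x * y) = emb x * emb y"
  using SS by (elim conjE allE) assumption

lemma emb_comm: "emb z * w = w * emb z"
  using SS by (elim conjE allE) assumption

lemma kK_add: "kK (x + y) = kK x + kK y"
  using SS by (elim conjE allE) assumption

lemma kK_emb: "kK (emb z * x) = emb z * kK x"
  using SS by (elim conjE allE) assumption

lemma kF_add: "kF (x + y) = kF x + kF y"
  using SS by (elim conjE allE) assumption

lemma kF_emb: "kF (emb z * x) = emb z * kF x"
  using SS by (elim conjE allE) assumption

lemma kK_mult: "kK (x * y) = kK x * kK y"
  using SS by (elim conjE allE) assumption

lemma kK1: "kK 1 = 1"
  using SS by (elim conjE allE) assumption

lemma kKi_kK: "kKi (kK x) = x"
  using SS by (elim conjE allE) assumption

lemma kF_mult: "kF (x * y) = kF x * kK y + kKi x * kF y"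
  using SS by (elim conjE allE) assumption

lemma kKkF: "kK (kF x) = emb (cq (1/q)) * kF (kK x)"
  using SS by (elim conjE allE) assumption

lemma rel1: "a * st a + emb (cq (q^2)) * c * st c = 1"
  using SS by (elim conjE allE) assumption

lemma rel2: "st a * a + st c * c = 1"
  using SS by (elim conjE allE) assumption

lemma dega: "kK a = emb (cq (q powr (-1/2))) * a"
  using SS by (elim conjE allE) assumption

lemma degc: "kK c = emb (cq (q powr (-1/2))) * c"
  using SS by (elim conjE allE) assumption

lemma degsa: "kK (st a) = emb (cq (q powr (1/2))) * st a"
  using SS by (elim conjE allE) assumption

lemma degsc: "kK (st c) = emb (cq (q powr (1/2))) * st c"
  using SS by (elim conjE allE) assumption

lemma kK0: "kK 0 = 0" using kK_add[of 0 0] by simp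

lemma kK_neg: "kK (- x) = - kK x"
proof -
  have "kK x + kK (- x) = 0" using kK_add[of x "- x"] kK0 by simp
  thus ?thesis by (metis neg_eq_iff_add_eq_0)
qed

abbreviation L where "L k \<equiv> Lsp q emb kK k"

lemma L_iff: "x \<in> L k \<longleftrightarrow> kK x = emb (cq (q powr (real_of_int k / 2))) * x"
  by (simp add: Lsp_def)

lemma L0: "0 \<in> L k" by (simp add: L_iff kK0)

lemma L_add: "x \<in> L k \<Longrightarrow> y \<in> L k \<Longrightarrow> x + y \<in> L k"
  by (simp add: L_iff kK_add distrib_left)

lemma L_neg: "x \<in> L k \<Longrightarrow> - x \<in> L k"
  by (simp add: L_iff kK_neg)

lemma emb_lc: "emb z * (x * y) = x * (emb z * y)"
  by (metis emb_comm mult.assoc)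

lemma L_emb: "x \<in> L k \<Longrightarrow> emb z * x \<in> L k"
proof -
  assume x: "x \<in> L k"
  have "kK (emb z * x) = emb z * (emb (cq (q powr (real_of_int k / 2))) * x)"
    using x by (simp add: kK_emb L_iff)
  also have "\<dots> = emb (cq (q powr (real_of_int k / 2))) * (emb z * x)" by (rule emb_lc)
  finally show ?thesis by (simp add: L_iff)
qed

lemma L_mult: "x \<in> L k \<Longrightarrow> y \<in> L l \<Longrightarrow> x * y \<in> L (k + l)"
proof -
  assume x: "x \<in> L k" and y: "y \<in> L l"
  have "kK (x * y) = emb (cq (q powr (real_of_int k / 2))) * x * (emb (cq (q powr (real_of_int l / 2))) * y)"
    using x y by (simp add: L_iff kK_mult)
  also have "\<dots> = emb (cq (q powr (real_of_int k / 2)) * cq (q powr (real_of_int l / 2))) * (x * y)"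
    by (simp add: emb_mult mult.assoc emb_lc[of _ x])
  also have "cq (q powr (real_of_int k / 2)) * cq (q powr (real_of_int l / 2)) = cq (q powr (real_of_int (k + l) / 2))"
    by (simp add: powr_add add_divide_distrib)
  finally show ?thesis by (simp add: L_iff)
qed

lemma L1: "1 \<in> L 0" by (simp add: L_iff kK1 emb1 q0 less_imp_neq[OF q0, symmetric])

lemma L_of_int: "x \<in> L k \<Longrightarrow> of_int i * x \<in> L k"
proof -
  assume x: "x \<in> L k"
  have nat: "of_nat j * x \<in> L k" for j
    by (induction j) (auto simp: L0 distrib_right intro: L_add x)
  show ?thesis
  proof (cases "0 \<le> i")
    case True thus ?thesis using nat[of "nat i"] by simp
  next
    case False
    have "- (of_nat (nat (- i)) * x) \<in> L k" using L_neg[OF nat] .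
    thus ?thesis using False by simp
  qed
qed

lemma emb_inv: "z \<noteq> 0 \<Longrightarrow> emb (1 / z) * emb z = 1"
  by (simp add: emb_mult[symmetric] emb1)

lemma emb_cancel: "emb z * x = emb z' * x \<Longrightarrow> z \<noteq> z' \<Longrightarrow> x = 0"
proof -
  assume h: "emb z * x = emb z' * x" and ne: "z \<noteq> z'"
  have e: "emb (z - z') = emb z - emb z'"
    using emb_add[of "z - z'" z'] by simp
  have "emb (z - z') * x = 0" using h by (simp add: e left_diff_distrib)
  hence "emb (1 / (z - z')) * (emb (z - z') * x) = 0" by simp
  thus "x = 0" using emb_inv[of "z - z'"] ne by (simp add: mult.assoc[symmetric])
qed

lemma deg_unique: "x \<in> L k \<Longrightarrow> x \<in> L l \<Longrightarrow> x \<noteq> 0 \<Longrightarrow> k = l"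
proof -
  assume "x \<in> L k" "x \<in> L l" "x \<noteq> 0"
  hence "emb (cq (q powr (real_of_int k / 2))) * x = emb (cq (q powr (real_of_int l / 2))) * x"
    by (simp add: L_iff)
  hence "cq (q powr (real_of_int k / 2)) = cq (q powr (real_of_int l / 2))"
    using emb_cancel \<open>x \<noteq> 0\<close> by blast
  hence "q powr (real_of_int k / 2) = q powr (real_of_int l / 2)" by simp
  hence "real_of_int k / 2 = real_of_int l / 2" using powr_inj[of q] q0 q1 by simp
  thus "k = l" by simp
qed

lemma om_rmul_L: "x \<in> L k \<Longrightarrow> om_rmul q emb kK w x =
   (emb (cq (q powr real_of_int k)) * fst w * x,
    emb (cq (q powr real_of_int k)) * fst (snd w) * x,
    emb (cq (q powr real_of_int (2 * k))) * snd (snd w) * x)"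
proof (cases "x = 0")
  case True thus ?thesis by (simp add: om_rmul_def)
next
  case False
  assume x: "x \<in> L k"
  have "x \<in> L (SOME k. x \<in> L k)" using x by (rule someI)
  hence "(SOME k. x \<in> L k) = k" using deg_unique x False by blast
  thus ?thesis by (simp add: om_rmul_def)
qed

lemma emb_cq1: "emb (cq 1) = 1" by (simp add: emb1)

lemma L0_fix: "f \<in> L 0 \<Longrightarrow> kK f = f"
  by (simp add: L_iff q0 less_imp_neq[OF q0, symmetric] emb1)

lemma Xm_def: "Xminus q emb kK kF x = emb (cq (q powr (-1/2))) * kF (kK x)"
  by (simp add: Xminus_def)

lemma kF_L: "x \<in> L k \<Longrightarrow> kF x \<in> L (k - 2)"
proof -
  assume x: "x \<in> L k"
  have kx: "kK x = emb (cq (q powr (real_of_int k / 2))) * x" using x unfolding L_iff .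
  have "kK (kF x) = emb (cq (1/q)) * kF (kK x)" by (rule kKkF)
  also have "\<dots> = emb (cq (1/q)) * kF (emb (cq (q powr (real_of_int k / 2))) * x)"
    unfolding kx ..
  also have "\<dots> = emb (cq (1/q) * cq (q powr (real_of_int k / 2))) * kF x"
    by (simp only: kF_emb emb_mult mult.assoc)
  also have "cq (1/q) * cq (q powr (real_of_int k / 2)) = cq (q powr (real_of_int (k - 2) / 2))"
  proof -
    have e1: "real_of_int (k - 2) / 2 = real_of_int k / 2 + (-1)" by simp
    have e2: "q powr (real_of_int k / 2 + (-1)) = q powr (real_of_int k / 2) * q powr (-1)"
      by (rule powr_add)
    have e3: "q powr (-1) = inverse q" using powr_minus[of q 1] q0 by simp
    have "q powr (real_of_int (k - 2) / 2) = q powr (real_of_int k / 2) * inverse q"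
      unfolding e1 e2 e3 ..
    have e4: "cq (1/q) * cq (q powr (real_of_int k / 2)) = cq ((1/q) * q powr (real_of_int k / 2))"
      by (rule of_real_mult[symmetric])
    have e5: "(1/q) * q powr (real_of_int k / 2) = q powr (real_of_int k / 2) * inverse q"
      by (simp add: inverse_eq_divide)
    show ?thesis unfolding e4 e5 \<open>q powr (real_of_int (k - 2) / 2) = q powr (real_of_int k / 2) * inverse q\<close> ..
  qed
  finally have "kK (kF x) = emb (cq (q powr (real_of_int (k - 2) / 2))) * kF x" .
  thus ?thesis unfolding L_iff .
qed

lemma Xminus_L: "x \<in> L k \<Longrightarrow> Xminus q emb kK kF x \<in> L (k - 2)"
proof -
  assume x: "x \<in> L k"
  have "kK x = emb (cq (q powr (real_of_int k / 2))) * x" using x unfolding L_iff .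
  hence kx: "kK x \<in> L k" using L_emb[OF x] by simp
  show ?thesis unfolding Xm_def by (rule L_emb[OF kF_L[OF kx]])
qed

lemma Xminus_leib: "eta \<in> L n \<Longrightarrow> f \<in> L 0 \<Longrightarrow>
   Xminus q emb kK kF (eta * f) = Xminus q emb kK kF eta * f + eta * Xminus q emb kK kF f"
proof -
  assume f: "f \<in> L 0"
  have "kF (kK (eta * f)) = kF (kK eta) * f + eta * kF f"
    by (simp add: kK_mult L0_fix[OF f] kF_mult kKi_kK)
  thus ?thesis unfolding Xm_def L0_fix[OF f]
    by (simp add: distrib_left mult.assoc emb_lc[of _ eta])
qed


lemma L_mult': "x \<in> L k \<Longrightarrow> y \<in> L l \<Longrightarrow> k + l = m \<Longrightarrow> x * y \<in> L m"
  using L_mult by blast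

lemma degs: "a \<in> L (-1)" "c \<in> L (-1)" "st a \<in> L 1" "st c \<in> L 1"
  by (simp_all add: L_iff dega degc degsa degsc)

lemma sl_concat: "sum_list (map g (concat (map h ps))) = sum_list (map (\<lambda>p. sum_list (map g (h p))) ps)"
  by (induction ps) auto

lemma grading_list: "\<exists>ps. (\<forall>p\<in>set ps. fst p \<in> L (-n) \<and> snd p \<in> L n) \<and>
    sum_list (map (\<lambda>p. fst p * snd p) ps) = 1"
proof (induction n rule: int_induct[where k=0])
  case base
  show ?case by (rule exI[of _ "[(1,1)]"]) (simp add: L1)
next
  case (step1 i)
  then obtain ps where ps: "\<forall>p\<in>set ps. fst p \<in> L (-i) \<and> snd p \<in> L i"
    "sum_list (map (\<lambda>p. fst p * snd p) ps) = 1" by blast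
  let ?e = "emb ((cq q)^2)"
  have rel1': "a * st a + ?e * c * st c = 1" using rel1 by simp
  let ?h = "\<lambda>p. [(fst p * a, st a * snd p), (fst p * (?e * c), st c * snd p)]"
  have e: "?e * c \<in> L (-1)" using L_emb degs by blast
  have "\<forall>p\<in>set (concat (map ?h ps)). fst p \<in> L (- (i+1)) \<and> snd p \<in> L (i+1)"
  proof -
    { fix p assume "p \<in> set ps"
      hence h: "fst p \<in> L (-i)" "snd p \<in> L i" using ps(1) by auto
      have "fst p * a \<in> L (- (i+1))" by (rule L_mult'[OF h(1) degs(1)]) simp
      moreover have "fst p * (?e * c) \<in> L (- (i+1))" by (rule L_mult'[OF h(1) e]) simp
      moreover have "st a * snd p \<in> L (i+1)" by (rule L_mult'[OF degs(3) h(2)]) simp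
      moreover have "st c * snd p \<in> L (i+1)" by (rule L_mult'[OF degs(4) h(2)]) simp
      ultimately have "fst p * a \<in> L (- (i+1)) \<and> fst p * (?e * c) \<in> L (- (i+1)) \<and>
         st a * snd p \<in> L (i+1) \<and> st c * snd p \<in> L (i+1)" by blast }
    thus ?thesis by auto
  qed
  moreover have "sum_list (map (\<lambda>p. fst p * snd p) (concat (map ?h ps))) = 1"
  proof -
    have eq: "x * a * (st a * y) + x * (?e * c) * (st c * y) = x * y" for x y
    proof -
      have "x * (a * st a + ?e * c * st c) * y = x * a * (st a * y) + x * (?e * c) * (st c * y)"
        by (simp add: distrib_left distrib_right mult.assoc)
      thus ?thesis using rel1' by simp
    qed
    show ?thesis using ps(2) by (simp add: sl_concat eq)
  qed
  ultimately show ?case by blast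
next
  case (step2 i)
  then obtain ps where ps: "\<forall>p\<in>set ps. fst p \<in> L (-i) \<and> snd p \<in> L i"
    "sum_list (map (\<lambda>p. fst p * snd p) ps) = 1" by blast
  let ?h = "\<lambda>p. [(fst p * st a, a * snd p), (fst p * st c, c * snd p)]"
  have "\<forall>p\<in>set (concat (map ?h ps)). fst p \<in> L (- (i - 1)) \<and> snd p \<in> L (i - 1)"
  proof -
    { fix p assume "p \<in> set ps"
      hence h: "fst p \<in> L (-i)" "snd p \<in> L i" using ps(1) by auto
      have "fst p * st a \<in> L (- (i - 1))" by (rule L_mult'[OF h(1) degs(3)]) simp
      moreover have "fst p * st c \<in> L (- (i - 1))" by (rule L_mult'[OF h(1) degs(4)]) simp
      moreover have "a * snd p \<in> L (i - 1)" by (rule L_mult'[OF degs(1) h(2)]) simp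
      moreover have "c * snd p \<in> L (i - 1)" by (rule L_mult'[OF degs(2) h(2)]) simp
      ultimately have "fst p * st a \<in> L (- (i - 1)) \<and> fst p * st c \<in> L (- (i - 1)) \<and>
         a * snd p \<in> L (i - 1) \<and> c * snd p \<in> L (i - 1)" by blast }
    thus ?thesis by auto
  qed
  moreover have "sum_list (map (\<lambda>p. fst p * snd p) (concat (map ?h ps))) = 1"
  proof -
    have eq: "x * st a * (a * y) + x * st c * (c * y) = x * y" for x y
    proof -
      have "x * (st a * a + st c * c) * y = x * st a * (a * y) + x * st c * (c * y)"
        by (simp add: distrib_left distrib_right mult.assoc)
      thus ?thesis using rel2 by simp
    qed
    show ?thesis using ps(2) by (simp add: sl_concat eq)
  qed
  ultimately show ?case by blast
qed

lemma grading: "\<exists>(k::nat) w v. (\<forall>j<k. w j \<in> L (-n) \<and> v j \<in> L n) \<and> (\<Sum>j<k. w j * v j) = 1"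
proof -
  obtain ps where ps: "\<forall>p\<in>set ps. fst p \<in> L (-n) \<and> snd p \<in> L n"
    "sum_list (map (\<lambda>p. fst p * snd p) ps) = 1" using grading_list by blast
  have A: "(\<Sum>j<length ps. fst (ps!j) * snd (ps!j)) = 1"
    using ps(2) by (simp add: sum_list_sum_nth atLeast0LessThan)
  have B: "\<forall>j<length ps. fst (ps!j) \<in> L (-n) \<and> snd (ps!j) \<in> L n"
    using ps(1) by auto
  show ?thesis by (rule exI, rule exI, rule exI, rule conjI[OF B A])
qed

lemma omm: "om_lmul x omega_minus = (0, x, 0)"
  by (simp add: om_lmul_def omega_minus_def)

lemma Om01_iff: "w \<in> Om01 q emb kK \<longleftrightarrow> (\<exists>x\<in>L (-2). w = (0, x, 0))"
  by (auto simp: Om01_def omm)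

lemma Om01_0: "0 \<in> Om01 q emb kK"
  by (auto simp: Om01_iff zero_prod_def intro!: bexI[of _ 0] L0)

lemma Om01_add: "w \<in> Om01 q emb kK \<Longrightarrow> w' \<in> Om01 q emb kK \<Longrightarrow> w + w' \<in> Om01 q emb kK"
  by (auto simp: Om01_iff intro: L_add)

lemma Om01_neg: "w \<in> Om01 q emb kK \<Longrightarrow> - w \<in> Om01 q emb kK"
  by (auto simp: Om01_iff intro: L_neg)

lemma powr0_emb: "emb (cq (q powr real_of_int 0)) = 1"
  using q0 by (simp add: emb1)

lemma om_rmul_0x: "y \<in> L k \<Longrightarrow> om_rmul q emb kK (0, x, 0) y = (0, emb (cq (q powr real_of_int k)) * x * y, 0)"
  by (simp add: om_rmul_L)

lemma om_rmul_B: "b \<in> L 0 \<Longrightarrow> om_rmul q emb kK w b = (fst w * b, fst (snd w) * b, snd (snd w) * b)"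
  using q0 by (simp add: om_rmul_L emb1)

lemma b2_L: "y \<in> L n \<Longrightarrow> om_rmul q emb kK (w + w') y = om_rmul q emb kK w y + om_rmul q emb kK w' y"
  by (simp add: om_rmul_L distrib_left distrib_right)

lemma b2_R: "y \<in> L n \<Longrightarrow> y' \<in> L n \<Longrightarrow> om_rmul q emb kK w (y + y') = om_rmul q emb kK w y + om_rmul q emb kK w y'"
  using L_add[of y n y'] by (simp add: om_rmul_L distrib_left distrib_right)

lemma b2_B: "y \<in> L n \<Longrightarrow> b \<in> L 0 \<Longrightarrow> om_rmul q emb kK (om_rmul q emb kK w b) y = om_rmul q emb kK w (b * y)"
proof -
  assume y: "y \<in> L n" and b: "b \<in> L 0"
  have hby: "b * y \<in> L n" using L_mult[OF b y] by simp
  show ?thesis unfolding om_rmul_B[OF b] om_rmul_L[OF y] om_rmul_L[OF hby] by (simp add: mult.assoc)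
qed

lemma b1_L: "om_lmul (x + x') w = om_lmul x w + om_lmul x' w"
  by (simp add: om_lmul_def distrib_right)
lemma b1_R: "om_lmul x (w + w') = om_lmul x w + om_lmul x w'"
  by (simp add: om_lmul_def distrib_left)
lemma b1_B: "om_lmul (x * b) w = om_lmul x (om_lmul b w)"
  by (simp add: om_lmul_def mult.assoc)

end


definition Zf :: "('a::ring_1 omega1 \<times> 'a \<Rightarrow> int) \<Rightarrow> 'a" where
  "Zf u = (\<Sum>r\<in>{p. u p \<noteq> 0}. of_int (u r) * (fst (snd (fst r)) * snd r))"

definition Rf :: "nat \<Rightarrow> (nat \<Rightarrow> 'a::ring_1) \<Rightarrow> (nat \<Rightarrow> 'a) \<Rightarrow> 'a \<Rightarrow> ('a omega1 \<times> 'a \<Rightarrow> int)" where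
  "Rf k w v z = (\<lambda>p. \<Sum>j<k. dl ((0::'a), z * w j, (0::'a)) (v j) p)"

lemma sum_mid: "(\<Sum>p\<in>S. ((0::'a::ring_1), f p, (0::'a))) = (0, \<Sum>p\<in>S. f p, 0)"
  by (simp add: prod_eq_iff fst_sum snd_sum)

lemma zsm_mid: "zsm k ((0::'a::ring_1), (z::'a), (0::'a)) = (0, of_int k * z, 0)"
  by (simp add: zsm_trip)

lemma dl_delta: "finite S \<Longrightarrow> (\<Sum>r\<in>S. u r * dl (fst r) (snd r) p) = (if p \<in> S then u p else 0)"
proof -
  assume "finite S"
  have "(\<Sum>r\<in>S. u r * dl (fst r) (snd r) p) = (\<Sum>r\<in>S. if r = p then u r else 0)"
    by (rule sum.cong) (auto simp: dl_def)
  also have "\<dots> = (if p \<in> S then u p else 0)" using \<open>finite S\<close> by (simp add: sum.delta')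
  finally show ?thesis .
qed

lemma tensor_rep: "C \<in> tensor M ract N lact B \<Longrightarrow>
   trep C \<in> fsums M N \<and> C = tcls M ract N lact B (trep C)"
proof -
  assume "C \<in> tensor M ract N lact B"
  then obtain u where u: "u \<in> fsums M N" "C = tcls M ract N lact B u" unfolding tensor_def by blast
  show ?thesis using trep_fsums[OF u(1), of ract lact B] tcls_trep[OF u(1), of ract lact B] unfolding u(2) by simp
qed

lemma rmul_supp: "{r. rmul_fs u g r \<noteq> 0} \<subseteq> (\<lambda>p. (fst p, g (snd p))) ` {p. u p \<noteq> 0}"
proof
  fix r assume "r \<in> {r. rmul_fs u g r \<noteq> 0}"
  hence r0: "rmul_fs u g r \<noteq> 0" by simp
  obtain m n' where r: "r = (m, n')" by (cases r)
  have ne: "(\<Sum>n\<in>{n. u (m, n) \<noteq> 0 \<and> g n = n'}. u (m, n)) \<noteq> 0"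
    using r0 unfolding r rmul_fs_def by simp
  obtain n where "n \<in> {n. u (m, n) \<noteq> 0 \<and> g n = n'}"
    using sum.not_neutral_contains_not_neutral[OF ne] by blast
  hence "u (m, n) \<noteq> 0" "g n = n'" by simp_all
  hence "(m, n) \<in> {p. u p \<noteq> 0}" "r = (\<lambda>p. (fst p, g (snd p))) (m, n)" using r by simp_all
  thus "r \<in> (\<lambda>p. (fst p, g (snd p))) ` {p. u p \<noteq> 0}" by (rule rev_image_eqI)
qed

lemma rmul_fsums: "u \<in> fsums M N \<Longrightarrow> (\<And>n. n \<in> N \<Longrightarrow> g n \<in> N) \<Longrightarrow> rmul_fs u g \<in> fsums M N"
proof -
  assume u: "u \<in> fsums M N" and g: "\<And>n. n \<in> N \<Longrightarrow> g n \<in> N"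
  have f: "finite {p. u p \<noteq> 0}" and sub: "{p. u p \<noteq> 0} \<subseteq> M \<times> N" using u by (auto simp: fsums_def)
  have s2: "(\<lambda>p. (fst p, g (snd p))) ` {p. u p \<noteq> 0} \<subseteq> M \<times> N" using sub g by auto
  have f2: "finite ((\<lambda>p. (fst p, g (snd p))) ` {p. u p \<noteq> 0})" using f by (rule finite_imageI)
  have "finite {r. rmul_fs u g r \<noteq> 0}" by (rule finite_subset[OF rmul_supp f2])
  moreover have "{r. rmul_fs u g r \<noteq> 0} \<subseteq> M \<times> N" using rmul_supp s2 by (rule subset_trans)
  ultimately show ?thesis unfolding fsums_def by blast
qed

lemma lsum_rmul:
  assumes fS: "finite {p. u p \<noteq> 0}"
  shows "lsum \<beta> (rmul_fs u g) = (\<Sum>p\<in>{p. u p \<noteq> 0}. zsm (u p) (\<beta> (fst p) (g (snd p))))"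
proof -
  let ?S = "{p. u p \<noteq> 0}"
  let ?G = "\<lambda>p. (fst p, g (snd p))"
  let ?T = "?G ` ?S"
  have fT: "finite ?T" using fS by simp
  have "lsum \<beta> (rmul_fs u g) = (\<Sum>r\<in>?T. zsm (rmul_fs u g r) (\<beta> (fst r) (snd r)))"
    by (rule lsum_superset[OF fT rmul_supp])
  also have "\<dots> = (\<Sum>r\<in>?T. \<Sum>p\<in>{p\<in>?S. ?G p = r}. zsm (u p) (\<beta> (fst p) (g (snd p))))"
  proof (rule sum.cong[OF refl])
    fix r assume "r \<in> ?T"
    obtain m n' where r: "r = (m, n')" by (cases r)
    let ?A = "{n. u (m, n) \<noteq> 0 \<and> g n = n'}"
    have Aeq: "{p\<in>?S. ?G p = r} = Pair m ` ?A" using r by auto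
    have fF: "finite {p\<in>?S. ?G p = r}" using fS by simp
    have "rmul_fs u g r = (\<Sum>n\<in>?A. u (m, n))" using r by (simp add: rmul_fs_def)
    also have "\<dots> = (\<Sum>p\<in>{p\<in>?S. ?G p = r}. u p)"
      unfolding Aeq by (subst sum.reindex) (auto simp: inj_on_def)
    finally have "zsm (rmul_fs u g r) (\<beta> (fst r) (snd r)) = (\<Sum>p\<in>{p\<in>?S. ?G p = r}. zsm (u p) (\<beta> (fst r) (snd r)))"
      using zsm_sum[OF fF] by simp
    also have "\<dots> = (\<Sum>p\<in>{p\<in>?S. ?G p = r}. zsm (u p) (\<beta> (fst p) (g (snd p))))"
      by (rule sum.cong) auto
    finally show "zsm (rmul_fs u g r) (\<beta> (fst r) (snd r)) = \<dots>" .
  qed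
  also have "\<dots> = (\<Sum>p\<in>?S. zsm (u p) (\<beta> (fst p) (g (snd p))))"
    by (rule sum.group[OF fS fT]) simp
  finally show ?thesis .
qed

definition rm :: "'a::ring_1 \<Rightarrow> 'a omega1 \<Rightarrow> 'a omega1" where
  "rm f w = (fst w * f, fst (snd w) * f, snd (snd w) * f)"

lemma rm_zsm: "zsm k (rm f w) = rm f (zsm k w)"
  by (simp add: rm_def zsm_trip mult.assoc)

lemma rm_sum: "(\<Sum>p\<in>S. rm f (h p)) = rm f (\<Sum>p\<in>S. h p)"
  by (simp add: rm_def prod_eq_iff fst_sum snd_sum sum_distrib_right)

context suq begin

abbreviation "tq n \<equiv> teq (Om01 q emb kK) (om_rmul q emb kK) (L n) (*) (L 0)"
abbreviation "cl n \<equiv> tcls (Om01 q emb kK) (om_rmul q emb kK) (L n) (*) (L 0)"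

lemma mu2_cl: "u \<in> fsums (Om01 q emb kK) (L n) \<Longrightarrow> mu2 q emb kK (cl n u) = lsum (om_rmul q emb kK) u"
  unfolding mu2_def
  by (rule tlin_tcls) (auto intro: b2_L b2_R b2_B)

lemma fsums_mem: "u \<in> fsums M N \<Longrightarrow> u p \<noteq> 0 \<Longrightarrow> p \<in> M \<times> N"
  unfolding fsums_def by blast

lemma lsum_r2: assumes u: "u \<in> fsums (Om01 q emb kK) (L n)"
  shows "lsum (om_rmul q emb kK) u = (0, emb (cq (q powr real_of_int n)) * Zf u, 0)"
proof -
  let ?S = "{p. u p \<noteq> 0}"
  have "lsum (om_rmul q emb kK) u = (\<Sum>p\<in>?S. zsm (u p) (om_rmul q emb kK (fst p) (snd p)))"
    by (simp add: lsum_def)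
  also have "\<dots> = (\<Sum>p\<in>?S. (0, emb (cq (q powr real_of_int n)) * (of_int (u p) * (fst (snd (fst p)) * snd p)), 0))"
  proof (rule sum.cong[OF refl])
    fix p assume "p \<in> ?S"
    hence "p \<in> Om01 q emb kK \<times> L n" using fsums_mem[OF u, of p] by simp
    hence p: "fst p \<in> Om01 q emb kK" "snd p \<in> L n" by (auto simp: mem_Times_iff)
    then obtain x where x: "fst p = (0, x, 0)" by (auto simp: Om01_iff)
    show "zsm (u p) (om_rmul q emb kK (fst p) (snd p)) =
      (0, emb (cq (q powr real_of_int n)) * (of_int (u p) * (fst (snd (fst p)) * snd p)), 0)"
      unfolding x using p(2)
      by (simp add: om_rmul_0x zsm_mid mult_of_int_commute mult.assoc)
  qed
  also have "\<dots> = (0, emb (cq (q powr real_of_int n)) * Zf u, 0)"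
    by (simp add: sum_mid Zf_def sum_distrib_left)
  finally show ?thesis .
qed


lemma inj_core:
  assumes u: "u \<in> fsums (Om01 q emb kK) (L n)"
    and wv: "\<forall>j<k. w j \<in> L (-n) \<and> v j \<in> L n" and one: "(\<Sum>j<k. w j * v j) = 1"
  shows "tq n u (Rf k w v (Zf u))"
proof -
  let ?S = "{p. u p \<noteq> 0}"
  have fS: "finite ?S" using u by (simp add: fsums_def)
  have Smem: "fst r \<in> Om01 q emb kK \<and> snd r \<in> L n" if "r \<in> ?S" for r
  proof -
    have "r \<in> Om01 q emb kK \<times> L n" using fsums_mem[OF u, of r] that by simp
    thus ?thesis by (auto simp: mem_Times_iff)
  qed
  define m where "m r j = ((0::'a), fst (snd (fst r)) * (snd r * w j), (0::'a))" for r :: "'a omega1 \<times> 'a" and j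
  have a: "u = (\<lambda>p. \<Sum>r\<in>?S. u r * dl (fst r) (snd r) p)"
    using dl_delta[OF fS] by (auto simp: fun_eq_iff)
  have b: "tq n (dl (fst r) (snd r)) (\<lambda>p. \<Sum>j<k. dl (m r j) (v j) p)" if r: "r \<in> ?S" for r
  proof -
    obtain x where x: "fst r = (0, x, 0)" "x \<in> L (-2)" using Smem[OF r] by (auto simp: Om01_iff)
    have y: "snd r \<in> L n" using Smem[OF r] by blast
    have yw: "snd r * w j \<in> L 0" if "j < k" for j
      using L_mult'[OF y, of "w j" "-n" 0] wv that by auto
    have ywv: "(snd r * w j) * v j \<in> L n" if "j < k" for j
      using L_mult'[OF yw[OF that], of "v j" n n] wv that by auto
    have ysum: "snd r = (\<Sum>j<k. (snd r * w j) * v j)"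
    proof -
      have "snd r = snd r * (\<Sum>j<k. w j * v j)" using one by simp
      thus ?thesis by (simp add: sum_distrib_left mult.assoc)
    qed
    have s0: "dl (fst r) (snd r) = dl (fst r) (\<Sum>j<k. (snd r * w j) * v j)"
      using ysum by (rule arg_cong)
    have s1: "tq n (dl (fst r) (\<Sum>j<k. (snd r * w j) * v j)) (\<lambda>p. \<Sum>j<k. dl (fst r) ((snd r * w j) * v j) p)"
    proof (rule dl_sumr)
      show "finite {..<k}" by simp
      show "fst r \<in> Om01 q emb kK" using Smem[OF r] by blast
      show "(snd r * w j) * v j \<in> L n" if "j \<in> {..<k}" for j using ywv that by simp
      show "0 \<in> L n" by (rule L0)
      show "x + y \<in> L n" if "x \<in> L n" "y \<in> L n" for x y using that by (rule L_add)
    qed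
    have s2: "tq n (\<lambda>p. \<Sum>j<k. dl (fst r) ((snd r * w j) * v j) p) (\<lambda>p. \<Sum>j<k. dl (m r j) (v j) p)"
    proof (rule teq_sum)
      fix j assume j: "j \<in> {..<k}"
      have "om_rmul q emb kK (fst r) (snd r * w j) = m r j"
        using yw j by (simp add: om_rmul_B x m_def)
      moreover have "tq n (dl (om_rmul q emb kK (fst r) (snd r * w j)) (v j)) (dl (fst r) ((snd r * w j) * v j))"
        using Smem[OF r] yw wv j by (intro dl_bal) auto
      ultimately show "tq n (dl (fst r) ((snd r * w j) * v j)) (dl (m r j) (v j))"
        using teq_sym by metis
    qed simp
    show ?thesis using teq_trans[OF teq_eq[OF s0] teq_trans[OF s1 s2]] .
  qed
  have c1: "tq n u (\<lambda>p. \<Sum>r\<in>?S. u r * (\<Sum>j<k. dl (m r j) (v j) p))"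
  proof -
    have "tq n (\<lambda>p. \<Sum>r\<in>?S. u r * dl (fst r) (snd r) p) (\<lambda>p. \<Sum>r\<in>?S. u r * (\<Sum>j<k. dl (m r j) (v j) p))"
    proof (rule teq_sum[OF fS])
      fix r assume "r \<in> ?S"
      show "tq n (\<lambda>p. u r * dl (fst r) (snd r) p) (\<lambda>p. u r * (\<Sum>j<k. dl (m r j) (v j) p))"
        by (rule teq_smul[OF b]) fact
    qed
    thus ?thesis by (rule teq_trans[OF teq_eq[OF a]])
  qed
  have c2: "(\<lambda>p. \<Sum>r\<in>?S. u r * (\<Sum>j<k. dl (m r j) (v j) p)) = (\<lambda>p. \<Sum>j<k. \<Sum>r\<in>?S. u r * dl (m r j) (v j) p)"
    by (rule ext) (simp add: sum_distrib_left sum.swap[of _ ?S])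
  have d: "tq n (\<lambda>p. \<Sum>r\<in>?S. u r * dl (m r j) (v j) p) (dl (0, Zf u * w j, 0) (v j))" if j: "j < k" for j
  proof -
    have mM: "m r j \<in> Om01 q emb kK" if rS: "r \<in> ?S" for r
    proof -
      obtain x where x: "fst r = (0, x, 0)" "x \<in> L (-2)" using Smem[OF rS] by (auto simp: Om01_iff)
      have "snd r * w j \<in> L 0" using L_mult'[of "snd r" n "w j" "-n" 0] Smem[OF rS] wv j by auto
      hence "x * (snd r * w j) \<in> L (-2)" using L_mult'[OF x(2)] by auto
      thus ?thesis unfolding m_def Om01_iff x by auto
    qed
    have zM: "zsm (u r) (m r j) \<in> Om01 q emb kK" if "r \<in> ?S" for r
      using mM[OF that] by (auto simp: m_def Om01_iff zsm_mid intro: L_of_int)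
    have vj: "v j \<in> L n" using wv j by auto
    have d1: "tq n (\<lambda>p. \<Sum>r\<in>?S. u r * dl (m r j) (v j) p) (\<lambda>p. \<Sum>r\<in>?S. dl (zsm (u r) (m r j)) (v j) p)"
    proof (rule teq_sum[OF fS])
      fix r assume r: "r \<in> ?S"
      show "tq n (\<lambda>p. u r * dl (m r j) (v j) p) (dl (zsm (u r) (m r j)) (v j))"
        by (rule teq_sym[OF dl_zsm[OF mM[OF r] vj Om01_0 Om01_add Om01_neg]])
    qed
    have d2: "tq n (\<lambda>p. \<Sum>r\<in>?S. dl (zsm (u r) (m r j)) (v j) p) (dl (\<Sum>r\<in>?S. zsm (u r) (m r j)) (v j))"
      by (rule teq_sym[OF dl_suml[OF fS vj zM Om01_0 Om01_add]])
    have d3: "(\<Sum>r\<in>?S. zsm (u r) (m r j)) = (0, Zf u * w j, 0)"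
      unfolding m_def zsm_mid sum_mid Zf_def by (simp add: sum_distrib_right mult.assoc)
    show ?thesis using teq_trans[OF d1 d2] unfolding d3 .
  qed
  have e: "tq n (\<lambda>p. \<Sum>j<k. \<Sum>r\<in>?S. u r * dl (m r j) (v j) p) (Rf k w v (Zf u))"
    unfolding Rf_def by (rule teq_sum) (auto intro: d)
  show ?thesis using teq_trans[OF c1[unfolded c2] e] .
qed


abbreviation "T n \<equiv> tensOL q emb kK n"

lemma powr_inv_emb: "emb (cq (q powr (- real_of_int n))) * emb (cq (q powr real_of_int n)) = 1"
proof -
  have "q powr (- real_of_int n) * q powr real_of_int n = 1"
    using q0 by (simp add: powr_add[symmetric])
  hence "emb (cq (q powr (- real_of_int n))) * emb (cq (q powr real_of_int n)) = emb (cq 1)"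
    by (simp only: emb_mult[symmetric] of_real_mult[symmetric])
  thus ?thesis by (simp add: emb1)
qed

lemma powr_inv_emb2: "emb (cq (q powr real_of_int n)) * emb (cq (q powr (- real_of_int n))) = 1"
proof -
  have "q powr real_of_int n * q powr (- real_of_int n) = 1"
    using q0 by (simp add: powr_add[symmetric])
  hence "emb (cq (q powr real_of_int n)) * emb (cq (q powr (- real_of_int n))) = emb (cq 1)"
    by (simp only: emb_mult[symmetric] of_real_mult[symmetric])
  thus ?thesis by (simp add: emb1)
qed

lemma mu2_val: "C \<in> T n \<Longrightarrow> mu2 q emb kK C = (0, emb (cq (q powr real_of_int n)) * Zf (trep C), 0)"
proof -
  assume C: "C \<in> T n"
  note r = tensor_rep[OF C]
  have e: "C = cl n (trep C)" using r by blast
  from e have "mu2 q emb kK C = mu2 q emb kK (cl n (trep C))" by (rule arg_cong)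
  also have "\<dots> = lsum (om_rmul q emb kK) (trep C)" by (rule mu2_cl[OF conjunct1[OF r]])
  finally show ?thesis using lsum_r2[OF conjunct1[OF r]] by simp
qed

lemma mu2_lsum: "C \<in> T n \<Longrightarrow> mu2 q emb kK C = lsum (om_rmul q emb kK) (trep C)"
proof -
  assume C: "C \<in> T n"
  note r = tensor_rep[OF C]
  have e: "C = cl n (trep C)" using r by blast
  from e have "mu2 q emb kK C = mu2 q emb kK (cl n (trep C))" by (rule arg_cong)
  also have "\<dots> = lsum (om_rmul q emb kK) (trep C)" by (rule mu2_cl[OF conjunct1[OF r]])
  finally show ?thesis .
qed

lemma mu2_inj: "C \<in> T n \<Longrightarrow> D \<in> T n \<Longrightarrow> mu2 q emb kK C = mu2 q emb kK D \<Longrightarrow> C = D"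
proof -
  assume C: "C \<in> T n" and D: "D \<in> T n" and eq: "mu2 q emb kK C = mu2 q emb kK D"
  let ?e = "emb (cq (q powr real_of_int n))"
  have "?e * Zf (trep C) = ?e * Zf (trep D)" using eq mu2_val[OF C] mu2_val[OF D] by simp
  hence "emb (cq (q powr (- real_of_int n))) * (?e * Zf (trep C)) = emb (cq (q powr (- real_of_int n))) * (?e * Zf (trep D))"
    by simp
  hence Z: "Zf (trep C) = Zf (trep D)" by (simp add: mult.assoc[symmetric] powr_inv_emb)
  obtain k :: nat and w v where wv: "\<forall>j<k. w j \<in> L (-n) \<and> v j \<in> L n" "(\<Sum>j<k. w j * v j) = 1"
    using grading by blast
  note rC = tensor_rep[OF C] and rD = tensor_rep[OF D]
  have "tq n (trep C) (Rf k w v (Zf (trep C)))" using inj_core[OF conjunct1[OF rC] wv] .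
  moreover have "tq n (trep D) (Rf k w v (Zf (trep D)))" using inj_core[OF conjunct1[OF rD] wv] .
  ultimately have "tq n (trep C) (trep D)" unfolding Z using teq_trans teq_sym by metis
  hence "cl n (trep C) = cl n (trep D)" by (rule tcls_eq)
  thus "C = D" using rC rD by metis
qed

lemma mu2_surj: "z \<in> L (n - 2) \<Longrightarrow> \<exists>D\<in>T n. mu2 q emb kK D = (0, z, 0)"
proof -
  assume z: "z \<in> L (n - 2)"
  let ?z = "emb (cq (q powr (- real_of_int n))) * z"
  have z': "?z \<in> L (n - 2)" using L_emb[OF z] .
  obtain k :: nat and w v where wv: "\<forall>j<k. w j \<in> L (-n) \<and> v j \<in> L n" and one: "(\<Sum>j<k. w j * v j) = 1"
    using grading by blast
  let ?U = "Rf k w v ?z"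
  have mem: "((0, ?z * w j, 0), v j) \<in> Om01 q emb kK \<times> L n" if "j < k" for j
  proof -
    have "?z * w j \<in> L (-2)" using L_mult'[OF z', of "w j" "-n" "-2"] wv that by auto
    thus ?thesis using wv that by (auto simp: Om01_iff)
  qed
  have fU: "finite {p. ?U p \<noteq> 0}" unfolding Rf_def by (rule fin_supp_sum) (auto simp: fin_dl)
  have sU: "{p. ?U p \<noteq> 0} \<subseteq> Om01 q emb kK \<times> L n"
  proof
    fix p assume "p \<in> {p. ?U p \<noteq> 0}"
    then obtain j where j: "j \<in> {..<k}" "dl (0, ?z * w j, 0) (v j) p \<noteq> 0"
      unfolding Rf_def by (auto elim: sum.not_neutral_contains_not_neutral)
    hence "p = ((0, ?z * w j, 0), v j)" by (auto simp: dl_def split: if_splits)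
    thus "p \<in> Om01 q emb kK \<times> L n" using mem j by auto
  qed
  have U: "?U \<in> fsums (Om01 q emb kK) (L n)" using fU sU by (simp add: fsums_def)
  have inT: "cl n ?U \<in> T n" using U unfolding tensor_def by blast
  have "mu2 q emb kK (cl n ?U) = lsum (om_rmul q emb kK) ?U" using U by (rule mu2_cl)
  also have "\<dots> = (\<Sum>j<k. lsum (om_rmul q emb kK) (dl (0, ?z * w j, 0) (v j)))"
    unfolding Rf_def by (rule lsum_sum) (auto simp: fin_dl)
  also have "\<dots> = (\<Sum>j<k. (0, emb (cq (q powr real_of_int n)) * (?z * w j) * v j, 0))"
    using wv by (intro sum.cong) (auto simp: lsum_dl om_rmul_0x)
  also have "\<dots> = (0, emb (cq (q powr real_of_int n)) * ?z * (\<Sum>j<k. w j * v j), 0)"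
    by (simp add: sum_mid sum_distrib_left mult.assoc)
  also have "\<dots> = (0, z, 0)"
    by (simp add: one mult.assoc[symmetric] powr_inv_emb2)
  finally show ?thesis using inT by blast
qed

end


context suq begin

lemma ex1_T: "z \<in> L (n - 2) \<Longrightarrow> \<exists>!D. D \<in> T n \<and> mu2 q emb kK D = (0, z, 0)"
proof -
  assume z: "z \<in> L (n - 2)"
  obtain D where D: "D \<in> T n" "mu2 q emb kK D = (0, z, 0)" using mu2_surj[OF z] by blast
  show ?thesis
  proof (rule ex1I[of _ D])
    show "D \<in> T n \<and> mu2 q emb kK D = (0, z, 0)" using D by blast
    fix D' assume "D' \<in> T n \<and> mu2 q emb kK D' = (0, z, 0)"
    thus "D' = D" using mu2_inj[of D' n D] D by simp
  qed
qed

lemma tadd_T: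
  assumes C: "C \<in> T n" and D: "D \<in> T n"
  shows "tadd (Om01 q emb kK) (om_rmul q emb kK) (L n) (*) (L 0) C D \<in> T n \<and>
    mu2 q emb kK (tadd (Om01 q emb kK) (om_rmul q emb kK) (L n) (*) (L 0) C D) = mu2 q emb kK C + mu2 q emb kK D"
proof -
  let ?u = "\<lambda>p. trep C p + trep D p"
  have uC: "trep C \<in> fsums (Om01 q emb kK) (L n)" using tensor_rep[OF C] by blast
  have uD: "trep D \<in> fsums (Om01 q emb kK) (L n)" using tensor_rep[OF D] by blast
  have fC: "finite {p. trep C p \<noteq> 0}" and fD: "finite {p. trep D p \<noteq> 0}"
    using uC uD by (simp_all add: fsums_def)
  have sub: "{p. ?u p \<noteq> 0} \<subseteq> {p. trep C p \<noteq> 0} \<union> {p. trep D p \<noteq> 0}" by auto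
  have u: "?u \<in> fsums (Om01 q emb kK) (L n)"
  proof -
    have "finite {p. ?u p \<noteq> 0}" using finite_subset[OF sub] fC fD by blast
    moreover have "{p. ?u p \<noteq> 0} \<subseteq> Om01 q emb kK \<times> L n" using sub uC uD unfolding fsums_def by blast
    ultimately show ?thesis unfolding fsums_def by blast
  qed
  have eq: "tadd (Om01 q emb kK) (om_rmul q emb kK) (L n) (*) (L 0) C D = cl n ?u"
    by (simp add: tadd_def)
  have "cl n ?u \<in> T n" using u unfolding tensor_def by blast
  moreover have "mu2 q emb kK (cl n ?u) = mu2 q emb kK C + mu2 q emb kK D"
    using mu2_cl[OF u] lsum_add[OF fC fD] mu2_lsum[OF C] mu2_lsum[OF D] by simp
  ultimately show ?thesis unfolding eq by blast
qed

lemma tract_T: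
  assumes C: "C \<in> T n" and f: "f \<in> L 0" and mz: "mu2 q emb kK C = (0, z, 0)"
  shows "tract_right (Om01 q emb kK) (om_rmul q emb kK) (L n) (*) (L 0) C (\<lambda>x. x * f) \<in> T n \<and>
    mu2 q emb kK (tract_right (Om01 q emb kK) (om_rmul q emb kK) (L n) (*) (L 0) C (\<lambda>x. x * f)) = (0, z * f, 0)"
proof -
  let ?u = "trep C"
  let ?g = "\<lambda>x. x * f"
  have u: "?u \<in> fsums (Om01 q emb kK) (L n)" using tensor_rep[OF C] by blast
  have fu: "finite {p. ?u p \<noteq> 0}" using u by (simp add: fsums_def)
  have g: "?g y \<in> L n" if "y \<in> L n" for y using L_mult'[OF that f] by simp
  have u': "rmul_fs ?u ?g \<in> fsums (Om01 q emb kK) (L n)" by (rule rmul_fsums[OF u g])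
  have eq: "tract_right (Om01 q emb kK) (om_rmul q emb kK) (L n) (*) (L 0) C ?g = cl n (rmul_fs ?u ?g)"
    by (simp add: tract_right_def)
  have "cl n (rmul_fs ?u ?g) \<in> T n" using u' unfolding tensor_def by blast
  moreover have "mu2 q emb kK (cl n (rmul_fs ?u ?g)) = (0, z * f, 0)"
  proof -
    have "mu2 q emb kK (cl n (rmul_fs ?u ?g)) = lsum (om_rmul q emb kK) (rmul_fs ?u ?g)"
      by (rule mu2_cl[OF u'])
    also have "\<dots> = (\<Sum>p\<in>{p. ?u p \<noteq> 0}. zsm (?u p) (om_rmul q emb kK (fst p) (snd p * f)))"
      by (rule lsum_rmul[OF fu])
    also have "\<dots> = (\<Sum>p\<in>{p. ?u p \<noteq> 0}. rm f (zsm (?u p) (om_rmul q emb kK (fst p) (snd p))))"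
    proof (rule sum.cong[OF refl])
      fix p assume "p \<in> {p. ?u p \<noteq> 0}"
      hence "p \<in> Om01 q emb kK \<times> L n" using fsums_mem[OF u, of p] by simp
      hence y: "snd p \<in> L n" by (auto simp: mem_Times_iff)
      have "om_rmul q emb kK (fst p) (snd p * f) = rm f (om_rmul q emb kK (fst p) (snd p))"
        using y g[OF y] by (simp add: om_rmul_L rm_def mult.assoc)
      thus "zsm (?u p) (om_rmul q emb kK (fst p) (snd p * f)) = rm f (zsm (?u p) (om_rmul q emb kK (fst p) (snd p)))"
        by (simp add: rm_zsm)
    qed
    also have "\<dots> = rm f (lsum (om_rmul q emb kK) ?u)"
      by (simp add: rm_sum lsum_def)
    also have "\<dots> = rm f (0, z, 0)" using mu2_lsum[OF C] mz by simp
    also have "\<dots> = (0, z * f, 0)" by (simp add: rm_def)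
    finally show ?thesis .
  qed
  ultimately show ?thesis unfolding eq by blast
qed

lemma mu1_ptens: "eta \<in> L n \<Longrightarrow> w \<in> Om01 q emb kK \<Longrightarrow>
   mu1 (ptens (L n) (*) (Om01 q emb kK) om_lmul (L 0) eta w) = om_lmul eta w"
proof -
  assume e: "eta \<in> L n" and w: "w \<in> Om01 q emb kK"
  have d: "dl eta w \<in> fsums (L n) (Om01 q emb kK)" using e w by (simp add: fsums_def dl_supp)
  have "mu1 (ptens (L n) (*) (Om01 q emb kK) om_lmul (L 0) eta w) = lsum om_lmul (dl eta w)"
    unfolding mu1_def ptens_def by (rule tlin_tcls) (simp_all add: b1_L b1_R b1_B d)
  thus ?thesis by (simp add: lsum_dl)
qed

lemma main:
  assumes e: "eta \<in> L n" and f: "f \<in> L 0"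
  shows "nablabar q emb kK kF n (eta * f) =
     tadd (Om01 q emb kK) (om_rmul q emb kK) (L n) (*) (L 0)
       (tract_right (Om01 q emb kK) (om_rmul q emb kK) (L n) (*) (L 0)
          (nablabar q emb kK kF n eta) (\<lambda>x. x * f))
       (Phi q emb kK n
          (ptens (L n) (*) (Om01 q emb kK) om_lmul (L 0) eta (dbar q emb kK kF f)))"
proof -
  let ?X = "Xminus q emb kK kF"
  have hXe: "?X eta \<in> L (n - 2)" by (rule Xminus_L[OF e])
  have hXf: "?X f \<in> L (-2)" using Xminus_L[OF f] by simp
  have ef: "eta * f \<in> L n" using L_mult'[OF e f] by simp
  have hXef: "?X (eta * f) \<in> L (n - 2)" by (rule Xminus_L[OF ef])
  have hprod: "eta * ?X f \<in> L (n - 2)" using L_mult'[OF e hXf] by simp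
  let ?N1 = "nablabar q emb kK kF n eta"
  have N1: "?N1 \<in> T n \<and> mu2 q emb kK ?N1 = (0, ?X eta, 0)"
    unfolding nablabar_def omm by (rule theI'[OF ex1_T[OF hXe]])
  have db: "dbar q emb kK kF f = (0, ?X f, 0)" by (simp add: dbar_def omm)
  have dbO: "dbar q emb kK kF f \<in> Om01 q emb kK" using hXf unfolding db Om01_iff by blast
  let ?C1 = "ptens (L n) (*) (Om01 q emb kK) om_lmul (L 0) eta (dbar q emb kK kF f)"
  have m1: "mu1 ?C1 = (0, eta * ?X f, 0)"
    using mu1_ptens[OF e dbO] by (simp add: db om_lmul_def)
  let ?P = "Phi q emb kK n ?C1"
  have P: "?P \<in> T n \<and> mu2 q emb kK ?P = (0, eta * ?X f, 0)"
    unfolding Phi_def m1 by (rule theI'[OF ex1_T[OF hprod]])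
  let ?TR = "tract_right (Om01 q emb kK) (om_rmul q emb kK) (L n) (*) (L 0) ?N1 (\<lambda>x. x * f)"
  have TR: "?TR \<in> T n \<and> mu2 q emb kK ?TR = (0, ?X eta * f, 0)"
    using tract_T[OF conjunct1[OF N1] f conjunct2[OF N1]] .
  let ?R = "tadd (Om01 q emb kK) (om_rmul q emb kK) (L n) (*) (L 0) ?TR ?P"
  note A = tadd_T[OF conjunct1[OF TR] conjunct1[OF P]]
  have "mu2 q emb kK ?R = mu2 q emb kK ?TR + mu2 q emb kK ?P" using A by blast
  also have "\<dots> = (0, ?X eta * f, 0) + (0, eta * ?X f, 0)" using TR P by (simp only:)
  also have "\<dots> = (0, ?X (eta * f), 0)" by (simp add: prod_eq_iff Xminus_leib[OF e f])
  finally have R: "?R \<in> T n \<and> mu2 q emb kK ?R = (0, ?X (eta * f), 0)" using A by blast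
  have eqN: "nablabar q emb kK kF n (eta * f) \<in> T n \<and>
      mu2 q emb kK (nablabar q emb kK kF n (eta * f)) = (0, ?X (eta * f), 0)"
    unfolding nablabar_def omm by (rule theI'[OF ex1_T[OF hXef]])
  have mm: "mu2 q emb kK (nablabar q emb kK kF n (eta * f)) = mu2 q emb kK ?R"
    by (rule trans[OF conjunct2[OF eqN] sym[OF conjunct2[OF R]]])
  show ?thesis by (rule mu2_inj[OF conjunct1[OF eqN] conjunct1[OF R] mm])
qed

end

theorem proposition3p7:
  fixes q :: real and emb :: "complex \<Rightarrow> 'a::ring_1" and st :: "'a \<Rightarrow> 'a"
    and a c :: 'a and kK kKi kE kF :: "'a \<Rightarrow> 'a" and n :: int and eta f :: 'a
  assumes "SUq2_setting q emb st a c kK kKi kE kF"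
    and "eta \<in> Lsp q emb kK n"
    and "f \<in> Bsp q emb kK"
  shows "nablabar q emb kK kF n (eta * f) =
     tadd (Om01 q emb kK) (om_rmul q emb kK) (Lsp q emb kK n) (*) (Bsp q emb kK)
       (tract_right (Om01 q emb kK) (om_rmul q emb kK) (Lsp q emb kK n) (*) (Bsp q emb kK)
          (nablabar q emb kK kF n eta) (\<lambda>x. x * f))
       (Phi q emb kK n
          (ptens (Lsp q emb kK n) (*) (Om01 q emb kK) om_lmul (Bsp q emb kK) eta (dbar q emb kK kF f)))"
  by (rule suq.main[OF suq.intro[OF assms(1)] assms(2,3)])


end
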